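(* Consider an agent-dependent SDP PEP for distributed optimization with $n$ agents, all of which are equivalent, and assume it admits a worst-case (optimal) solution. Then there is a worst-case instance such that (i) the worst-case sequences of iterates are unitary transformations of each other: there exist $R_i\in\mathbb{R}^{d\times d}$ with $R_i^TR_i=I$ such that $x_i^k=R_ix_1^k$ for all agents $i$ and all iterations $k$; and (ii) the worst-case local functions have equal values at their own iterates, $f_i(x_i^k)=f_j(x_j^k)$ for all $i,j$ and all $k$, and can be chosen identical up to a unitary change of variables: $f_i(x)=f_1(R_i^Tx)$ for all $i$, where $f_1$ is a function interpolating agent 1's worst-case iterates, gradients and function values.
   Context: Distributed optimization: $n$ agents with local functions $f_i:\mathbb{R}^d\to\mathbb{R}$ minimize $\frac1n\sum_if_i(x)$ via an algorithm using local gradient evaluations, consensus steps with averaging matrices, and linear combinations of local variables. In the agent-dependent SDP PEP, each agent $i$ holds $p$ vector variables (iterates $x_i^k$, gradients $g_i^k=\nabla f_i(x_i^k)$, other local variables) as columns of $P_i\in\mathbb{R}^{d\times p}$ in a common order and $q$ function values $f_i^k=f_i(x_i^k)$ in $f_i\in\mathbb{R}^q$; the variables are $F=[f_1^T\dots f_n^T]$ and $G=P^TP\succeq0$ with $G_{ij}=P_i^TP_j$; objective and constraints (including interpolation constraints ensuring each agent's triplets $(x_i^k,g_i^k,f_i^k)$ are interpolated by a function of the given class) are linear or LMI in $(F,G)$. A worst-case instance is obtained from an optimal $(F,G)$ by factoring $G=P^TP$ and interpolating each agent's triplets. Agents $i,j$ are equivalent if swapping their blocks in any feasible solution yields a feasible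 solution with the same objective value. *)

theory Defs
  imports "HOL-Analysis.Analysis"
begin

text \<open>Index set of the Gram matrix: pairs (agent i, local column c), i < n, c < p.
  Agent 1 of the paper is agent index 0 here.\<close>
definition blk :: "nat \<Rightarrow> nat \<Rightarrow> (nat \<times> nat) set" where
  "blk n p = {0..<n} \<times> {0..<p}"

definition psd_on :: "'a set \<Rightarrow> ('a \<Rightarrow> 'a \<Rightarrow> real) \<Rightarrow> bool" where
  "psd_on I M \<longleftrightarrow> (\<forall>a\<in>I. \<forall>b\<in>I. M a b = M b a) \<and>
     (\<forall>v. 0 \<le> (\<Sum>a\<in>I. \<Sum>b\<in>I. v a * M a b * v b))"

text \<open>A linear matrix inequality in (F,G):
  M0 + sum F_iv AF_iv + sum G_ab AG_ab is PSD (of size dim).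
  Linear inequalities are 1x1 LMIs, equalities are pairs of them.\<close>
record lmi =
  lmi_dim :: nat
  lmi_M0 :: "nat \<Rightarrow> nat \<Rightarrow> real"
  lmi_AF :: "nat \<Rightarrow> nat \<Rightarrow> nat \<Rightarrow> nat \<Rightarrow> real"
  lmi_AG :: "nat \<times> nat \<Rightarrow> nat \<times> nat \<Rightarrow> nat \<Rightarrow> nat \<Rightarrow> real"

definition lmi_holds ::
  "nat \<Rightarrow> nat \<Rightarrow> nat \<Rightarrow> lmi \<Rightarrow> (nat \<Rightarrow> nat \<Rightarrow> real) \<Rightarrow> (nat \<times> nat \<Rightarrow> nat \<times> nat \<Rightarrow> real) \<Rightarrow> bool" where
  "lmi_holds n p q c F G \<longleftrightarrow>
     psd_on {0..<lmi_dim c} (\<lambda>r s. lmi_M0 c r s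
        + (\<Sum>i<n. \<Sum>v<q. F i v * lmi_AF c i v r s)
        + (\<Sum>a\<in>blk n p. \<Sum>b\<in>blk n p. G a b * lmi_AG c a b r s))"

text \<open>F i v = v-th function value of agent i (v < q);
  G (i,c) (j,c') = entry (c,c') of block G_ij = P_i^T P_j.\<close>
definition pep_feasible ::
  "nat \<Rightarrow> nat \<Rightarrow> nat \<Rightarrow> lmi list \<Rightarrow> (nat \<Rightarrow> nat \<Rightarrow> real) \<Rightarrow> (nat \<times> nat \<Rightarrow> nat \<times> nat \<Rightarrow> real) \<Rightarrow> bool" where
  "pep_feasible n p q cs F G \<longleftrightarrow> psd_on (blk n p) G \<and> (\<forall>c\<in>set cs. lmi_holds n p q c F G)"

definition pep_obj ::
  "nat \<Rightarrow> nat \<Rightarrow> nat \<Rightarrow> (nat \<Rightarrow> nat \<Rightarrow> real) \<Rightarrow> (nat \<times> nat \<Rightarrow> nat \<times> nat \<Rightarrow> real)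
   \<Rightarrow> (nat \<Rightarrow> nat \<Rightarrow> real) \<Rightarrow> (nat \<times> nat \<Rightarrow> nat \<times> nat \<Rightarrow> real) \<Rightarrow> real" where
  "pep_obj n p q cF cG F G =
     (\<Sum>i<n. \<Sum>v<q. cF i v * F i v) + (\<Sum>a\<in>blk n p. \<Sum>b\<in>blk n p. cG a b * G a b)"

definition pep_optimal where
  "pep_optimal n p q cs cF cG F G \<longleftrightarrow> pep_feasible n p q cs F G \<and>
     (\<forall>F' G'. pep_feasible n p q cs F' G' \<longrightarrow> pep_obj n p q cF cG F' G' \<le> pep_obj n p q cF cG F G)"

definition swap_agent :: "nat \<Rightarrow> nat \<Rightarrow> nat \<Rightarrow> nat" where
  "swap_agent i j a = (if a = i then j else if a = j then i else a)"

definition swapF :: "nat \<Rightarrow> nat \<Rightarrow> (nat \<Rightarrow> nat \<Rightarrow> real) \<Rightarrow> (nat \<Rightarrow> nat \<Rightarrow> real)" where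
  "swapF i j F = (\<lambda>a v. F (swap_agent i j a) v)"

definition swapG :: "nat \<Rightarrow> nat \<Rightarrow> (nat \<times> nat \<Rightarrow> nat \<times> nat \<Rightarrow> real) \<Rightarrow> (nat \<times> nat \<Rightarrow> nat \<times> nat \<Rightarrow> real)" where
  "swapG i j G = (\<lambda>a b. G (swap_agent i j (fst a), snd a) (swap_agent i j (fst b), snd b))"

definition agents_equivalent where
  "agents_equivalent n p q cs cF cG i j \<longleftrightarrow>
     (\<forall>F G. pep_feasible n p q cs F G \<longrightarrow>
        pep_feasible n p q cs (swapF i j F) (swapG i j G) \<and>
        pep_obj n p q cF cG (swapF i j F) (swapG i j G) = pep_obj n p q cF cG F G)"

text \<open>P (i,c) = column c of P_i in R^d; G = P^T P.\<close>
definition is_gram :: "nat \<Rightarrow> nat \<Rightarrow> (nat \<times> nat \<Rightarrow> nat \<times> nat \<Rightarrow> real) \<Rightarrow> (nat \<times> nat \<Rightarrow> 'v::real_inner) \<Rightarrow> bool" where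
  "is_gram n p G P \<longleftrightarrow> (\<forall>a\<in>blk n p. \<forall>b\<in>blk n p. G a b = inner (P a) (P b))"

text \<open>Triplets (x_i^k, g_i^k, f_i^k), k < m, of agent i: iterate x_i^k is column xc k,
  gradient g_i^k is column gc k, value f_i^k is entry fv k.\<close>
definition agent_triplets where
  "agent_triplets m xc gc fv P F i = {(P (i, xc k), P (i, gc k), F i (fv k)) | k. k < m}"

definition interpolates :: "('v::real_inner \<Rightarrow> real) set \<Rightarrow> ('v \<Rightarrow> real) \<Rightarrow> ('v \<times> 'v \<times> real) set \<Rightarrow> bool" where
  "interpolates Fc f T \<longleftrightarrow> f \<in> Fc \<and>
     (\<forall>(x, g, v)\<in>T. f x = v \<and> (f has_derivative (\<lambda>h. inner g h)) (at x))"

end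

theory Submission
  imports Defs "HOL-Combinatorics.Permutations"
begin
lemma sum_one:
  assumes "finite I" "a \<in> I"
  shows "(\<Sum>x\<in>I. (if x = a then \<alpha> else 0) * h x) = (\<alpha>::real) * h a"
proof -
  have "(\<Sum>x\<in>I. (if x = a then \<alpha> else 0) * h x) = (\<Sum>x\<in>I. if x = a then \<alpha> * h x else 0)"
    by (rule sum.cong) auto
  then show ?thesis using assms by simp
qed

lemma psd_quad: "psd_on I M \<Longrightarrow> 0 \<le> (\<Sum>x\<in>I. \<Sum>y\<in>I. v x * M x y * v y)"
  unfolding psd_on_def by blast

lemma sum_two:
  assumes "finite I" "a \<in> I" "b \<in> I" "a \<noteq> b"
  shows "(\<Sum>x\<in>I. (if x = a then \<alpha> else if x = b then \<beta> else 0) * h x) = (\<alpha>::real) * h a + \<beta> * h b"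
proof -
  have I: "I = insert a (insert b (I - {a,b}))" using assms by auto
  have "(\<Sum>x\<in>I. (if x = a then \<alpha> else if x = b then \<beta> else 0) * h x)
     = (\<Sum>x\<in>insert a (insert b (I - {a,b})). (if x = a then \<alpha> else if x = b then \<beta> else 0) * h x)"
    using I by simp
  also have "\<dots> = \<alpha> * h a + \<beta> * h b"
    using assms by (subst sum.insert; simp)+
  finally show ?thesis .
qed

lemma psd_diag_nonneg:
  assumes "finite I" "psd_on I M" "a \<in> I"
  shows "0 \<le> M a a"
proof -
  let ?v = "\<lambda>x. if x = a then 1 else 0::real"
  have "0 \<le> (\<Sum>x\<in>I. \<Sum>y\<in>I. ?v x * M x y * ?v y)" using assms(2) by (rule psd_quad)
  also have "\<dots> = M a a" using assms by (simp add: sum.remove)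
  finally show ?thesis .
qed

lemma psd_zero_diag:
  assumes "finite I" "psd_on I M" "a \<in> I" "b \<in> I" "M a a = 0"
  shows "M a b = 0"
proof (rule ccontr)
  assume ne: "M a b \<noteq> 0"
  then have ab: "a \<noteq> b" using assms by auto
  have sym: "M b a = M a b" using assms(2-4) unfolding psd_on_def by auto
  define t where "t = - (M b b + 1) / (2 * M a b)"
  let ?v = "\<lambda>x. if x = a then t else if x = b then 1 else 0::real"
  have "0 \<le> (\<Sum>x\<in>I. \<Sum>y\<in>I. ?v x * M x y * ?v y)" using assms(2) by (rule psd_quad)
  also have "\<dots> = (\<Sum>x\<in>I. ?v x * (\<Sum>y\<in>I. ?v y * M x y))"
    by (simp add: sum_distrib_left mult.commute mult.left_commute)
  also have "\<dots> = t * (t * M a a + M a b) + (t * M b a + M b b)"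
    using assms ab by (simp add: sum_two)
  also have "\<dots> = -1" using assms(5) sym ne by (simp add: t_def field_simps)
  finally show False by simp
qed

lemma psd_schur:
  assumes fin: "finite I" and aI: "a \<notin> I" and psd: "psd_on (insert a I) M"
  shows "psd_on I (\<lambda>x y. M x y - M x a * M a y / M a a)"
proof -
  have sym: "\<And>x y. x \<in> insert a I \<Longrightarrow> y \<in> insert a I \<Longrightarrow> M x y = M y x"
    using psd unfolding psd_on_def by blast
  show ?thesis unfolding psd_on_def
  proof (intro conjI ballI allI)
    fix x y assume "x \<in> I" "y \<in> I"
    then have "M x y = M y x" "M x a = M a x" "M y a = M a y" using sym by auto
    then show "M x y - M x a * M a y / M a a = M y x - M y a * M a x / M a a"
      by simp
  next
    fix v :: "'a \<Rightarrow> real"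
    define s where "s = (\<Sum>x\<in>I. v x * M x a)"
    define t where "t = - s / M a a"
    define w where "w = (\<lambda>x. if x = a then t else v x)"
    have s2: "(\<Sum>y\<in>I. M a y * v y) = s"
      unfolding s_def
    proof (rule sum.cong)
      fix y assume "y \<in> I" then have "M a y = M y a" using sym by blast
      then show "M a y * v y = v y * M y a" by simp
    qed simp
    have QI: "(\<Sum>x\<in>I. \<Sum>y\<in>I. w x * M x y * w y) = (\<Sum>x\<in>I. \<Sum>y\<in>I. v x * M x y * v y)"
      using aI unfolding w_def by (auto intro!: sum.cong)
    have "0 \<le> (\<Sum>x\<in>insert a I. \<Sum>y\<in>insert a I. w x * M x y * w y)"
      using psd by (rule psd_quad)
    also have "\<dots> = t * M a a * t + (\<Sum>y\<in>I. t * M a y * v y) + ((\<Sum>x\<in>I. v x * M x a * t)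
         + (\<Sum>x\<in>I. \<Sum>y\<in>I. v x * M x y * v y))"
    proof -
      have wI: "\<And>x. x \<in> I \<Longrightarrow> w x = v x" and wa: "w a = t" using aI unfolding w_def by auto
      show ?thesis using fin aI QI by (simp add: sum.insert wI wa sum.distrib cong: sum.cong)
    qed
    also have "\<dots> = t * M a a * t + 2 * t * s + (\<Sum>x\<in>I. \<Sum>y\<in>I. v x * M x y * v y)"
    proof -
      have "(\<Sum>y\<in>I. t * M a y * v y) = t * s"
        unfolding s2[symmetric] sum_distrib_left by (rule sum.cong) (simp_all add: mult_ac)
      moreover have "(\<Sum>x\<in>I. v x * M x a * t) = t * s" unfolding s_def sum_distrib_left
        by (rule sum.cong) (simp_all add: mult_ac)
      ultimately show ?thesis by linarith
    qed
    also have "\<dots> = (\<Sum>x\<in>I. \<Sum>y\<in>I. v x * M x y * v y) - s * s / M a a"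
      unfolding t_def by (cases "M a a = 0") (simp_all add: field_simps power2_eq_square)
    also have "\<dots> = (\<Sum>x\<in>I. \<Sum>y\<in>I. v x * (M x y - M x a * M a y / M a a) * v y)"
    proof -
      have "s * s / M a a = (\<Sum>x\<in>I. \<Sum>y\<in>I. v x * (M x a * M a y / M a a) * v y)"
      proof -
        have "s * s = (\<Sum>x\<in>I. \<Sum>y\<in>I. (v x * M x a) * (M a y * v y))"
        proof -
          have "s * s = (\<Sum>x\<in>I. v x * M x a) * (\<Sum>y\<in>I. M a y * v y)" using s2 s_def by simp
          then show ?thesis by (simp only: sum_product)
        qed
        then show ?thesis
          by (simp add: sum_divide_distrib algebra_simps)
      qed
      then show ?thesis by (simp add: algebra_simps sum_subtractf)
    qed
    finally show "0 \<le> (\<Sum>x\<in>I. \<Sum>y\<in>I. v x * (M x y - M x a * M a y / M a a) * v y)" .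
  qed
qed

lemma psd_subset:
  assumes "psd_on (insert a I) M" "finite I" "a \<notin> I"
  shows "psd_on I M"
  unfolding psd_on_def
proof (intro conjI ballI allI)
  show "\<And>x y. x \<in> I \<Longrightarrow> y \<in> I \<Longrightarrow> M x y = M y x" using assms unfolding psd_on_def by blast
next
  fix v :: "'a \<Rightarrow> real"
  let ?w = "\<lambda>x. if x = a then 0 else v x"
  have "0 \<le> (\<Sum>x\<in>insert a I. \<Sum>y\<in>insert a I. ?w x * M x y * ?w y)"
    using assms(1) by (rule psd_quad)
  also have "\<dots> = (\<Sum>x\<in>I. \<Sum>y\<in>I. v x * M x y * v y)"
    using assms by (simp add: sum.insert cong: sum.cong) (auto intro!: sum.cong)
  finally show "0 \<le> (\<Sum>x\<in>I. \<Sum>y\<in>I. v x * M x y * v y)" .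
qed

lemma gram_exists:
  fixes M :: "'a \<Rightarrow> 'a \<Rightarrow> real" and B :: "'v::euclidean_space set"
  assumes "finite I" "psd_on I M" "B \<subseteq> Basis" "card I \<le> card B"
  shows "\<exists>P::'a \<Rightarrow> 'v. (\<forall>a\<in>I. P a \<in> span B) \<and> (\<forall>a\<in>I. \<forall>b\<in>I. M a b = inner (P a) (P b))"
  using assms
proof (induction I arbitrary: M B rule: finite_induct)
  case empty
  show ?case by auto
next
  case (insert a I)
  have finB: "finite B" using insert.prems(2) finite_Basis finite_subset by blast
  have "card B \<ge> Suc (card I)" using insert by simp
  then obtain e where eB: "e \<in> B" using card.empty by (metis all_not_in_conv not_less_eq_eq zero_le)
  define B' where "B' = B - {e}"
  have B'sub: "B' \<subseteq> Basis" using insert.prems(2) B'_def by auto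
  have cardB': "card I \<le> card B'" using eB finB insert B'_def by (simp add: card_Diff_singleton)
  define M' where "M' = (\<lambda>x y. M x y - M x a * M a y / M a a)"
  have psd': "psd_on I M'" unfolding M'_def using insert.hyps insert.prems(1) by (rule psd_schur)
  obtain U where Usp: "\<forall>x\<in>I. U x \<in> span B'" and Ug: "\<forall>x\<in>I. \<forall>y\<in>I. M' x y = inner (U x) (U y)"
    using insert.IH[OF psd' B'sub cardB'] by blast
  have eBasis: "e \<in> Basis" using eB insert.prems(2) by blast
  have orth: "inner e (U x) = 0" if "x \<in> I" for x
  proof -
    have "orthogonal e (U x)"
    proof (rule orthogonal_to_span)
      show "U x \<in> span B'" using Usp that by blast
      fix y assume "y \<in> B'"
      then have "y \<in> Basis" "y \<noteq> e" using B'sub B'_def by auto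
      then show "orthogonal e y" unfolding orthogonal_def using eBasis inner_not_same_Basis by metis
    qed
    then show ?thesis unfolding orthogonal_def .
  qed
  have ee: "inner e e = 1" using eBasis by simp
  have sym: "\<And>x y. x \<in> insert a I \<Longrightarrow> y \<in> insert a I \<Longrightarrow> M x y = M y x"
    using insert.prems(1) unfolding psd_on_def by blast
  have Maa: "0 \<le> M a a" using psd_diag_nonneg[OF _ insert.prems(1) insertI1] insert.hyps(1) by blast
  define r where "r = sqrt (M a a)"
  have rr: "r * r = M a a" unfolding r_def using Maa by simp
  have zero: "M a y = 0" if "y \<in> I" "r = 0" for y
  proof -
    have "M a a = 0" using rr that by simp
    moreover have "finite (insert a I)" using insert.hyps(1) by simp
    moreover have "y \<in> insert a I" using that(1) by simp
    ultimately show ?thesis using psd_zero_diag[OF _ insert.prems(1) insertI1] by blast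
  qed
  have aeq: "r * (M a y / r) = M a y" if "y \<in> I" for y
    using zero[OF that] by (cases "r = 0") simp_all
  define P where "P = (\<lambda>x. if x = a then r *\<^sub>R e else (M a x / r) *\<^sub>R e + U x)"
  show ?case
  proof (intro exI conjI ballI)
    fix x assume "x \<in> insert a I"
    have "e \<in> span B" using eB by (simp add: span_base)
    moreover have "span B' \<subseteq> span B" by (rule span_mono) (auto simp: B'_def)
    then have "x \<in> I \<Longrightarrow> U x \<in> span B" using Usp by blast
    ultimately have spans: "e \<in> span B" "x \<in> I \<Longrightarrow> U x \<in> span B" by blast+
    show "P x \<in> span B"
    proof (cases "x = a")
      case False
      then have "x \<in> I" using \<open>x \<in> insert a I\<close> by simp
      then show ?thesis using False \<open>e \<in> span B\<close> \<open>x \<in> I \<Longrightarrow> U x \<in> span B\<close>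
        by (simp add: P_def span_add span_mul)
    qed (use spans in \<open>simp add: P_def span_mul\<close>)
  next
    fix x y assume x: "x \<in> insert a I" and y: "y \<in> insert a I"
    have xa: "x \<in> I \<Longrightarrow> x \<noteq> a" "y \<in> I \<Longrightarrow> y \<noteq> a" using insert.hyps by auto
    show "M x y = inner (P x) (P y)"
    proof (cases "x = a")
      case True
      show ?thesis
      proof (cases "y = a")
        case True
        then show ?thesis using \<open>x = a\<close> by (simp add: P_def ee rr)
      next
        case False
        then have yI: "y \<in> I" using y by auto
        then show ?thesis using \<open>x = a\<close> False aeq[OF yI]
          by (simp add: P_def inner_add_right orth ee)
      qed
    next
      case False
      then have xI: "x \<in> I" using x by auto
      show ?thesis
      proof (cases "y = a")
        case True
        have "M x a = M a x" using sym xI by auto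
        moreover have "inner (P x) (P a) = inner (P a) (P x)" by (rule inner_commute)
        moreover have "inner (P a) (P x) = M a x" using False xI aeq[OF xI]
          by (simp add: P_def inner_add_right orth ee)
        ultimately show ?thesis using True by simp
      next
        case yn: False
        then have yI: "y \<in> I" using y by auto
        have "inner (P x) (P y) = (M a x / r) * (M a y / r) + M' x y"
          using False yn xI yI Ug orth[OF xI] orth[OF yI]
          by (simp add: P_def inner_add_left inner_add_right ee inner_commute)
        also have "\<dots> = M x y"
          unfolding M'_def using sym[of x a] xI rr by (simp add: field_simps)
        finally show ?thesis by simp
      qed
    qed
  qed
qed

lemma reflection_orth:
  fixes a :: "'a::euclidean_space"
  shows "orthogonal_transformation (\<lambda>x. x - (2 * inner x a / inner a a) *\<^sub>R a)"
  unfolding orthogonal_transformation_def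
proof (intro conjI allI)
  show "linear (\<lambda>x. x - (2 * inner x a / inner a a) *\<^sub>R a)"
    by (rule linearI) (simp_all add: inner_add_left algebra_simps add_divide_distrib)
next
  fix v w :: 'a
  show "(v - (2 * inner v a / inner a a) *\<^sub>R a) \<bullet> (w - (2 * inner w a / inner a a) *\<^sub>R a) = v \<bullet> w"
  proof (cases "a = 0")
    case True then show ?thesis by simp
  next
    case False
    then have "inner a a \<noteq> 0" by simp
    then show ?thesis
      by (simp add: inner_diff_left inner_diff_right inner_commute field_simps power2_eq_square)
  qed
qed

lemma orth_ext:
  fixes u v :: "nat \<Rightarrow> 'a::euclidean_space"
  assumes "\<forall>c<k. \<forall>c'<k. inner (u c) (u c') = inner (v c) (v c')"
  shows "\<exists>h. orthogonal_transformation h \<and> (\<forall>c<k. h (u c) = v c)"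
  using assms
proof (induction k)
  case 0
  show ?case by (rule exI[of _ "\<lambda>x. x"]) simp
next
  case (Suc k)
  then obtain h where h: "orthogonal_transformation h" "\<forall>c<k. h (u c) = v c" by auto
  have hi: "\<And>x y. inner (h x) (h y) = inner x y" using h(1) unfolding orthogonal_transformation_def by blast
  define w where "w = h (u k)"
  define a where "a = w - v k"
  define H where "H = (\<lambda>x. x - (2 * inner x a / inner a a) *\<^sub>R a)"
  have wv: "inner w (v c) = inner (v k) (v c)" if "c < k" for c
    using hi[of "u k" "u c"] h(2) that Suc.prems unfolding w_def by auto
  have ww: "inner w w = inner (v k) (v k)"
    using hi[of "u k" "u k"] Suc.prems unfolding w_def by auto
  have av: "inner (v c) a = 0" if "c < k" for c
    using wv[OF that] unfolding a_def by (simp add: inner_diff_right inner_commute)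
  have Hv: "H (v c) = v c" if "c < k" for c
    using av[OF that] unfolding H_def by simp
  have Hw: "H w = v k"
  proof (cases "a = 0")
    case True then show ?thesis unfolding H_def a_def by simp
  next
    case False
    have aa: "inner a a = 2 * (inner w w - inner w (v k))"
      unfolding a_def using ww by (simp add: inner_diff_left inner_diff_right inner_commute)
    have wa: "inner w a = inner w w - inner w (v k)"
      unfolding a_def by (simp add: inner_diff_right)
    have "inner a a \<noteq> 0" using False by simp
    moreover have "inner a a = 2 * inner w a" using aa wa by simp
    ultimately have "2 * inner w a / inner a a = 1" by (metis divide_self)
    note one = this
    have "H w = w - (2 * inner w a / inner a a) *\<^sub>R a" unfolding H_def by simp
    also have "\<dots> = w - a" by (simp only: one scaleR_one)
    finally have "H w = w - a" .
    then show ?thesis unfolding a_def by simp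
  qed
  show ?case
  proof (intro exI conjI allI impI)
    show "orthogonal_transformation (H \<circ> h)"
      using orthogonal_transformation_compose[OF _ h(1)] reflection_orth unfolding H_def by blast
  next
    fix c assume "c < Suc k"
    then show "(H \<circ> h) (u c) = v c"
      using Hv h(2) Hw unfolding w_def by (cases "c = k") auto
  qed
qed

definition permF :: "(nat \<Rightarrow> nat) \<Rightarrow> (nat \<Rightarrow> nat \<Rightarrow> real) \<Rightarrow> (nat \<Rightarrow> nat \<Rightarrow> real)" where
  "permF \<sigma> F = (\<lambda>a v. F (\<sigma> a) v)"

definition permG :: "(nat \<Rightarrow> nat) \<Rightarrow> (nat \<times> nat \<Rightarrow> nat \<times> nat \<Rightarrow> real) \<Rightarrow> (nat \<times> nat \<Rightarrow> nat \<times> nat \<Rightarrow> real)" where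
  "permG \<sigma> G = (\<lambda>a b. G (\<sigma> (fst a), snd a) (\<sigma> (fst b), snd b))"

lemma swap_agent_transpose: "swap_agent i j = Transposition.transpose i j"
  by (rule ext) (simp add: swap_agent_def Transposition.transpose_def)

lemma perm_feasible:
  assumes perm: "\<sigma> permutes {..<n}"
    and equiv: "\<forall>i<n. \<forall>j<n. agents_equivalent n p q cs cF cG i j"
  shows "\<forall>F G. pep_feasible n p q cs F G \<longrightarrow>
           pep_feasible n p q cs (permF \<sigma> F) (permG \<sigma> G) \<and>
           pep_obj n p q cF cG (permF \<sigma> F) (permG \<sigma> G) = pep_obj n p q cF cG F G"
proof (rule permutes_induct[OF perm finite_lessThan])
  have "permF id F = F" "permG id G = G" for F G
    by (auto simp: permF_def permG_def)
  then show "\<forall>F G. pep_feasible n p q cs F G \<longrightarrow>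
           pep_feasible n p q cs (permF id F) (permG id G) \<and>
           pep_obj n p q cF cG (permF id F) (permG id G) = pep_obj n p q cF cG F G" by simp
next
  fix a b \<sigma>
  assume swap: "a \<in> {..<n}" "b \<in> {..<n}" "a \<noteq> b" and IH: "\<forall>F G. pep_feasible n p q cs F G \<longrightarrow>
           pep_feasible n p q cs (permF \<sigma> F) (permG \<sigma> G) \<and>
           pep_obj n p q cF cG (permF \<sigma> F) (permG \<sigma> G) = pep_obj n p q cF cG F G"
  show "\<forall>F G. pep_feasible n p q cs F G \<longrightarrow>
           pep_feasible n p q cs (permF (Transposition.transpose a b \<circ> \<sigma>) F) (permG (Transposition.transpose a b \<circ> \<sigma>) G) \<and>
           pep_obj n p q cF cG (permF (Transposition.transpose a b \<circ> \<sigma>) F) (permG (Transposition.transpose a b \<circ> \<sigma>) G) = pep_obj n p q cF cG F G"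
  proof (intro allI impI)
    fix F G assume feas: "pep_feasible n p q cs F G"
    let ?t = "Transposition.transpose a b"
    have ab: "a < n" "b < n" using swap by auto
    have eq1: "permF (?t \<circ> \<sigma>) F = permF \<sigma> (swapF a b F)"
      by (simp add: permF_def swapF_def swap_agent_transpose)
    have eq2: "permG (?t \<circ> \<sigma>) G = permG \<sigma> (swapG a b G)"
      by (simp add: permG_def swapG_def swap_agent_transpose)
    have s: "pep_feasible n p q cs (swapF a b F) (swapG a b G)"
         "pep_obj n p q cF cG (swapF a b F) (swapG a b G) = pep_obj n p q cF cG F G"
      using equiv ab feas unfolding agents_equivalent_def by blast+
    show "pep_feasible n p q cs (permF (?t \<circ> \<sigma>) F) (permG (?t \<circ> \<sigma>) G) \<and>
          pep_obj n p q cF cG (permF (?t \<circ> \<sigma>) F) (permG (?t \<circ> \<sigma>) G) = pep_obj n p q cF cG F G"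
      unfolding eq1 eq2 using IH s by metis
  qed
qed

lemma sum_avg_swap:
  fixes f :: "'s \<Rightarrow> 'x \<Rightarrow> real"
  assumes "finite S" "finite X"
  shows "(\<Sum>x\<in>X. g x * ((\<Sum>s\<in>S. f s x) / N)) = (\<Sum>s\<in>S. \<Sum>x\<in>X. g x * f s x) / N"
proof -
  have "(\<Sum>x\<in>X. g x * ((\<Sum>s\<in>S. f s x) / N)) = (\<Sum>x\<in>X. \<Sum>s\<in>S. g x * f s x) / N"
    by (simp add: sum_divide_distrib sum_distrib_left)
  also have "\<dots> = (\<Sum>s\<in>S. \<Sum>x\<in>X. g x * f s x) / N"
    by (subst sum.swap) (rule refl)
  finally show ?thesis .
qed

lemma lin_avg:
  fixes Fs :: "'s \<Rightarrow> nat \<Rightarrow> nat \<Rightarrow> real" and Gs :: "'s \<Rightarrow> 'b \<Rightarrow> 'b \<Rightarrow> real"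
  assumes "finite S" "finite X"
  shows "(\<Sum>i<n. \<Sum>v<q. C i v * ((\<Sum>s\<in>S. Fs s i v) / N)) + (\<Sum>a\<in>X. \<Sum>b\<in>X. D a b * ((\<Sum>s\<in>S. Gs s a b) / N))
       = (\<Sum>s\<in>S. (\<Sum>i<n. \<Sum>v<q. C i v * Fs s i v) + (\<Sum>a\<in>X. \<Sum>b\<in>X. D a b * Gs s a b)) / N"
proof -
  have 1: "(\<Sum>i<n. \<Sum>v<q. C i v * ((\<Sum>s\<in>S. Fs s i v) / N)) = (\<Sum>s\<in>S. \<Sum>i<n. \<Sum>v<q. C i v * Fs s i v) / N"
  proof -
    have "(\<Sum>i<n. \<Sum>v<q. C i v * ((\<Sum>s\<in>S. Fs s i v) / N)) = (\<Sum>i<n. 1 * ((\<Sum>s\<in>S. \<Sum>v<q. C i v * Fs s i v) / N))"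
      by (simp only: sum_avg_swap[OF assms(1) finite_lessThan] mult_1)
    also have "\<dots> = (\<Sum>s\<in>S. \<Sum>i<n. 1 * (\<Sum>v<q. C i v * Fs s i v)) / N"
      using assms by (rule_tac sum_avg_swap) auto
    finally show ?thesis by simp
  qed
  have 2: "(\<Sum>a\<in>X. \<Sum>b\<in>X. D a b * ((\<Sum>s\<in>S. Gs s a b) / N)) = (\<Sum>s\<in>S. \<Sum>a\<in>X. \<Sum>b\<in>X. D a b * Gs s a b) / N"
  proof -
    have "(\<Sum>a\<in>X. \<Sum>b\<in>X. D a b * ((\<Sum>s\<in>S. Gs s a b) / N)) = (\<Sum>a\<in>X. 1 * ((\<Sum>s\<in>S. \<Sum>b\<in>X. D a b * Gs s a b) / N))"
      by (simp only: sum_avg_swap[OF assms(1) assms(2)] mult_1)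
    also have "\<dots> = (\<Sum>s\<in>S. \<Sum>a\<in>X. 1 * (\<Sum>b\<in>X. D a b * Gs s a b)) / N"
      using assms by (rule_tac sum_avg_swap) auto
    finally show ?thesis by simp
  qed
  show ?thesis unfolding 1 2 by (simp add: sum.distrib add_divide_distrib)
qed

lemma psd_avg:
  fixes M :: "'s \<Rightarrow> 'a \<Rightarrow> 'a \<Rightarrow> real"
  assumes "finite S" "\<forall>s\<in>S. psd_on I (M s)" "0 \<le> (N::real)"
  shows "psd_on I (\<lambda>a b. (\<Sum>s\<in>S. M s a b) / N)"
  unfolding psd_on_def
proof (intro conjI ballI allI)
  fix a b assume "a \<in> I" "b \<in> I"
  then show "(\<Sum>s\<in>S. M s a b) / N = (\<Sum>s\<in>S. M s b a) / N"
    using assms(2) unfolding psd_on_def by (metis (no_types, lifting) sum.cong)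
next
  fix v :: "'a \<Rightarrow> real"
  have "(\<Sum>a\<in>I. \<Sum>b\<in>I. v a * ((\<Sum>s\<in>S. M s a b) / N) * v b)
      = (\<Sum>a\<in>I. \<Sum>b\<in>I. \<Sum>s\<in>S. v a * M s a b * v b) / N"
    by (simp add: sum_divide_distrib sum_distrib_left sum_distrib_right)
  also have "\<dots> = (\<Sum>s\<in>S. \<Sum>a\<in>I. \<Sum>b\<in>I. v a * M s a b * v b) / N"
  proof -
    have "(\<Sum>a\<in>I. \<Sum>b\<in>I. \<Sum>s\<in>S. v a * M s a b * v b) = (\<Sum>a\<in>I. \<Sum>s\<in>S. \<Sum>b\<in>I. v a * M s a b * v b)"
      by (rule sum.cong[OF refl]) (rule sum.swap)
    also have "\<dots> = (\<Sum>s\<in>S. \<Sum>a\<in>I. \<Sum>b\<in>I. v a * M s a b * v b)" by (rule sum.swap)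
    finally show ?thesis by simp
  qed
  also have "0 \<le> \<dots>"
  proof -
    have "\<And>s. s \<in> S \<Longrightarrow> 0 \<le> (\<Sum>a\<in>I. \<Sum>b\<in>I. v a * M s a b * v b)"
      using assms(2) psd_quad by blast
    then show ?thesis by (rule divide_nonneg_nonneg[OF sum_nonneg assms(3)])
  qed
  finally show "0 \<le> (\<Sum>a\<in>I. \<Sum>b\<in>I. v a * ((\<Sum>s\<in>S. M s a b) / N) * v b)" .
qed

lemma avg_feasible:
  assumes fin: "finite S" and ne: "S \<noteq> {}"
    and feas: "\<forall>s\<in>S. pep_feasible n p q cs (Fs s) (Gs s)"
  shows "pep_feasible n p q cs (\<lambda>i v. (\<Sum>s\<in>S. Fs s i v) / card S) (\<lambda>a b. (\<Sum>s\<in>S. Gs s a b) / card S)"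
  unfolding pep_feasible_def
proof (intro conjI ballI)
  show "psd_on (blk n p) (\<lambda>a b. (\<Sum>s\<in>S. Gs s a b) / real (card S))"
    using fin feas by (intro psd_avg) (auto simp: pep_feasible_def)
next
  fix c assume c: "c \<in> set cs"
  have N: "real (card S) \<noteq> 0" using fin ne by simp
  have finb: "finite (blk n p)" by (simp add: blk_def)
  let ?Mat = "\<lambda>s r t. lmi_M0 c r t + (\<Sum>i<n. \<Sum>v<q. Fs s i v * lmi_AF c i v r t)
        + (\<Sum>a\<in>blk n p. \<Sum>b\<in>blk n p. Gs s a b * lmi_AG c a b r t)"
  have eq: "(\<lambda>r t. lmi_M0 c r t
        + (\<Sum>i<n. \<Sum>v<q. (\<Sum>s\<in>S. Fs s i v) / card S * lmi_AF c i v r t)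
        + (\<Sum>a\<in>blk n p. \<Sum>b\<in>blk n p. (\<Sum>s\<in>S. Gs s a b) / card S * lmi_AG c a b r t))
      = (\<lambda>r t. (\<Sum>s\<in>S. ?Mat s r t) / card S)"
  proof (intro ext)
    fix r t
    have L: "(\<Sum>i<n. \<Sum>v<q. lmi_AF c i v r t * ((\<Sum>s\<in>S. Fs s i v) / card S))
         + (\<Sum>a\<in>blk n p. \<Sum>b\<in>blk n p. lmi_AG c a b r t * ((\<Sum>s\<in>S. Gs s a b) / card S))
       = (\<Sum>s\<in>S. (\<Sum>i<n. \<Sum>v<q. lmi_AF c i v r t * Fs s i v)
          + (\<Sum>a\<in>blk n p. \<Sum>b\<in>blk n p. lmi_AG c a b r t * Gs s a b)) / card S"
      using fin finb by (rule lin_avg)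
    have M0: "lmi_M0 c r t = (\<Sum>s\<in>S. lmi_M0 c r t) / card S" using N by simp
    show "lmi_M0 c r t
        + (\<Sum>i<n. \<Sum>v<q. (\<Sum>s\<in>S. Fs s i v) / card S * lmi_AF c i v r t)
        + (\<Sum>a\<in>blk n p. \<Sum>b\<in>blk n p. (\<Sum>s\<in>S. Gs s a b) / card S * lmi_AG c a b r t)
       = (\<Sum>s\<in>S. ?Mat s r t) / card S"
    proof -
      have "lmi_M0 c r t
        + (\<Sum>i<n. \<Sum>v<q. (\<Sum>s\<in>S. Fs s i v) / card S * lmi_AF c i v r t)
        + (\<Sum>a\<in>blk n p. \<Sum>b\<in>blk n p. (\<Sum>s\<in>S. Gs s a b) / card S * lmi_AG c a b r t)
        = lmi_M0 c r t + ((\<Sum>i<n. \<Sum>v<q. lmi_AF c i v r t * ((\<Sum>s\<in>S. Fs s i v) / card S))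
         + (\<Sum>a\<in>blk n p. \<Sum>b\<in>blk n p. lmi_AG c a b r t * ((\<Sum>s\<in>S. Gs s a b) / card S)))"
        by (simp add: mult.commute add.assoc)
      also have "\<dots> = (\<Sum>s\<in>S. lmi_M0 c r t) / card S + (\<Sum>s\<in>S. (\<Sum>i<n. \<Sum>v<q. lmi_AF c i v r t * Fs s i v)
          + (\<Sum>a\<in>blk n p. \<Sum>b\<in>blk n p. lmi_AG c a b r t * Gs s a b)) / card S"
        using L M0 by simp
      also have "\<dots> = (\<Sum>s\<in>S. ?Mat s r t) / card S"
        by (simp add: sum.distrib add_divide_distrib mult.commute add.assoc)
      finally show ?thesis .
    qed
  qed
  show "lmi_holds n p q c (\<lambda>i v. (\<Sum>s\<in>S. Fs s i v) / real (card S)) (\<lambda>a b. (\<Sum>s\<in>S. Gs s a b) / real (card S))"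
    unfolding lmi_holds_def eq
    using fin feas c by (intro psd_avg) (auto simp: pep_feasible_def lmi_holds_def)
qed

lemma avg_obj:
  assumes fin: "finite S" and ne: "S \<noteq> {}"
    and obj: "\<forall>s\<in>S. pep_obj n p q cF cG (Fs s) (Gs s) = z"
  shows "pep_obj n p q cF cG (\<lambda>i v. (\<Sum>s\<in>S. Fs s i v) / card S) (\<lambda>a b. (\<Sum>s\<in>S. Gs s a b) / card S) = z"
proof -
  have finb: "finite (blk n p)" by (simp add: blk_def)
  have "pep_obj n p q cF cG (\<lambda>i v. (\<Sum>s\<in>S. Fs s i v) / card S) (\<lambda>a b. (\<Sum>s\<in>S. Gs s a b) / card S)
      = (\<Sum>s\<in>S. pep_obj n p q cF cG (Fs s) (Gs s)) / card S"
    unfolding pep_obj_def using fin finb by (rule lin_avg)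
  also have "\<dots> = (\<Sum>s\<in>S. z) / card S" using obj by simp
  also have "\<dots> = z" using fin ne by simp
  finally show ?thesis .
qed

theorem proposition5:
  fixes n p q m :: nat
    and cs :: "lmi list"
    and cF :: "nat \<Rightarrow> nat \<Rightarrow> real"
    and cG :: "nat \<times> nat \<Rightarrow> nat \<times> nat \<Rightarrow> real"
    and xc gc fv :: "nat \<Rightarrow> nat"
    and Fc :: "(real^'d \<Rightarrow> real) set"
  assumes n_pos: "1 \<le> n"
    and idx: "\<forall>k<m. xc k < p \<and> gc k < p \<and> fv k < q"
    and equiv: "\<forall>i<n. \<forall>j<n. agents_equivalent n p q cs cF cG i j"
    and opt_exists: "\<exists>F G. pep_optimal n p q cs cF cG F G"
    and interp: "\<forall>F G (P :: nat \<times> nat \<Rightarrow> real^'d) i.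
                   pep_feasible n p q cs F G \<longrightarrow> is_gram n p G P \<longrightarrow> i < n \<longrightarrow>
                   (\<exists>f. interpolates Fc f (agent_triplets m xc gc fv P F i))"
    and class_invariant: "\<forall>f\<in>Fc. \<forall>R :: real^'d^'d. orthogonal_matrix R \<longrightarrow>
                   (\<lambda>x. f (transpose R *v x)) \<in> Fc"
    and dim: "n * p \<le> CARD('d)"
  shows "\<exists>F G (P :: nat \<times> nat \<Rightarrow> real^'d) (f :: nat \<Rightarrow> real^'d \<Rightarrow> real) (R :: nat \<Rightarrow> real^'d^'d).
           pep_optimal n p q cs cF cG F G \<and> is_gram n p G P \<and>
           (\<forall>i<n. interpolates Fc (f i) (agent_triplets m xc gc fv P F i)) \<and>
           (\<forall>i<n. orthogonal_matrix (R i) \<and> (\<forall>k<m. P (i, xc k) = R i *v P (0, xc k))) \<and>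
           (\<forall>i<n. \<forall>j<n. \<forall>k<m. f i (P (i, xc k)) = f j (P (j, xc k))) \<and>
           (\<forall>i<n. \<forall>x. f i x = f 0 (transpose (R i) *v x))"
proof -
  obtain F0 G0 where opt0: "pep_optimal n p q cs cF cG F0 G0" using opt_exists by blast
  define S where "S = {\<sigma>. \<sigma> permutes {..<n}}"
  have finS: "finite S" unfolding S_def by (simp add: finite_permutations)
  have neS: "S \<noteq> {}" unfolding S_def using permutes_id by blast
  define Fb where "Fb = (\<lambda>i v. (\<Sum>\<sigma>\<in>S. permF \<sigma> F0 i v) / card S)"
  define Gb where "Gb = (\<lambda>a b. (\<Sum>\<sigma>\<in>S. permG \<sigma> G0 a b) / card S)"
  have feas0: "pep_feasible n p q cs F0 G0" using opt0 unfolding pep_optimal_def by blast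
  have each: "\<forall>\<sigma>\<in>S. pep_feasible n p q cs (permF \<sigma> F0) (permG \<sigma> G0) \<and>
      pep_obj n p q cF cG (permF \<sigma> F0) (permG \<sigma> G0) = pep_obj n p q cF cG F0 G0"
    using perm_feasible[OF _ equiv] feas0 unfolding S_def by blast
  have feasb: "pep_feasible n p q cs Fb Gb"
    unfolding Fb_def Gb_def using avg_feasible[OF finS neS, of n p q cs "\<lambda>\<sigma>. permF \<sigma> F0" "\<lambda>\<sigma>. permG \<sigma> G0"] each
    by blast
  have objb: "pep_obj n p q cF cG Fb Gb = pep_obj n p q cF cG F0 G0"
    unfolding Fb_def Gb_def using avg_obj[OF finS neS, of n p q cF cG "\<lambda>\<sigma>. permF \<sigma> F0" "\<lambda>\<sigma>. permG \<sigma> G0"] each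
    by blast
  have optb: "pep_optimal n p q cs cF cG Fb Gb"
    using opt0 feasb objb unfolding pep_optimal_def by simp
  have n0: "0 < n" using n_pos by simp
  have symF: "Fb i v = Fb 0 v" if "i < n" for i v
  proof -
    have t: "Transposition.transpose 0 i permutes {..<n}" using that n0 by (intro permutes_swap_id) auto
    have "(\<Sum>\<sigma>\<in>S. permF \<sigma> F0 0 v) = (\<Sum>\<sigma>\<in>S. permF (\<sigma> \<circ> Transposition.transpose 0 i) F0 0 v)"
      unfolding S_def by (rule sum_permutations_compose_right[OF t])
    also have "\<dots> = (\<Sum>\<sigma>\<in>S. permF \<sigma> F0 i v)" by (simp add: permF_def)
    finally show ?thesis unfolding Fb_def by simp
  qed
  have symG: "Gb (i, c) (i, c') = Gb (0, c) (0, c')" if "i < n" for i c c'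
  proof -
    have t: "Transposition.transpose 0 i permutes {..<n}" using that n0 by (intro permutes_swap_id) auto
    have "(\<Sum>\<sigma>\<in>S. permG \<sigma> G0 (0, c) (0, c')) = (\<Sum>\<sigma>\<in>S. permG (\<sigma> \<circ> Transposition.transpose 0 i) G0 (0, c) (0, c'))"
      unfolding S_def by (rule sum_permutations_compose_right[OF t])
    also have "\<dots> = (\<Sum>\<sigma>\<in>S. permG \<sigma> G0 (i, c) (i, c'))" by (simp add: permG_def)
    finally show ?thesis unfolding Gb_def by simp
  qed
  have psdb: "psd_on (blk n p) Gb" using feasb unfolding pep_feasible_def by blast
  have cardblk: "card (blk n p) \<le> card (Basis :: (real^'d) set)" using dim by (simp add: blk_def)
  obtain P :: "nat \<times> nat \<Rightarrow> real^'d" where Pg: "\<forall>a\<in>blk n p. \<forall>b\<in>blk n p. Gb a b = inner (P a) (P b)"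
    using gram_exists[OF _ psdb subset_refl cardblk] by (auto simp: blk_def)
  have gram: "is_gram n p Gb P" unfolding is_gram_def using Pg by blast
  obtain f0 where f0: "interpolates Fc f0 (agent_triplets m xc gc fv P Fb 0)"
    using interp feasb gram n0 by blast
  have "\<forall>i. \<exists>h. i < n \<longrightarrow> orthogonal_transformation h \<and> (\<forall>c<p. h (P (0, c)) = P (i, c))"
  proof
    fix i
    show "\<exists>h. i < n \<longrightarrow> orthogonal_transformation h \<and> (\<forall>c<p. h (P (0, c)) = P (i, c))"
    proof (cases "i < n")
      case True
      have "\<forall>c<p. \<forall>c'<p. inner (P (0, c)) (P (0, c')) = inner (P (i, c)) (P (i, c'))"
      proof (intro allI impI)
        fix c c' assume "c < p" "c' < p"
        then have "(0, c) \<in> blk n p" "(0, c') \<in> blk n p" "(i, c) \<in> blk n p" "(i, c') \<in> blk n p"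
          using True n0 by (auto simp: blk_def)
        then show "inner (P (0, c)) (P (0, c')) = inner (P (i, c)) (P (i, c'))"
          using Pg symG[OF True, of c c'] by metis
      qed
      then show ?thesis using orth_ext[of p "\<lambda>c. P (0, c)" "\<lambda>c. P (i, c)"] by blast
    qed simp
  qed
  then obtain H where H: "\<And>i. i < n \<Longrightarrow> orthogonal_transformation (H i) \<and> (\<forall>c<p. H i (P (0, c)) = P (i, c))"
    by metis
  define R :: "nat \<Rightarrow> real^'d^'d" where "R = (\<lambda>i. if i = 0 then mat 1 else matrix (H i))"
  have Rorth: "orthogonal_matrix (R i)" if "i < n" for i
    using H[OF that] unfolding R_def by (auto simp: orthogonal_transformation_matrix orthogonal_matrix_id)
  have RP: "R i *v P (0, c) = P (i, c)" if "i < n" "c < p" for i c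
  proof (cases "i = 0")
    case True then show ?thesis unfolding R_def by simp
  next
    case False
    have "linear (H i)" using H[OF that(1)] unfolding orthogonal_transformation_def by blast
    then have "R i *v P (0, c) = H i (P (0, c))" unfolding R_def using False by (simp add: matrix_works)
    then show ?thesis using H[OF that(1)] that(2) by simp
  qed
  have RtR: "transpose (R i) *v (R i *v y) = y" if "i < n" for i y
    using Rorth[OF that] unfolding orthogonal_matrix_def by (simp add: matrix_vector_mul_assoc)
  define f where "f = (\<lambda>i x. f0 (transpose (R i) *v x))"
  have f0eq: "f 0 = f0" unfolding f_def R_def by (simp add: transpose_mat)
  have fP: "f i (P (i, c)) = f0 (P (0, c))" if "i < n" "c < p" for i c
    unfolding f_def using RP[OF that, symmetric] RtR[OF that(1)] by simp
  have f0i: "f0 \<in> Fc" using f0 unfolding interpolates_def by (rule conjunct1)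
  have f0t: "\<forall>(x, g, v)\<in>agent_triplets m xc gc fv P Fb 0. f0 x = v \<and> (f0 has_derivative (\<lambda>h. inner g h)) (at x)"
    using f0 unfolding interpolates_def by (rule conjunct2)
  have interp_i: "interpolates Fc (f i) (agent_triplets m xc gc fv P Fb i)" if "i < n" for i
    unfolding interpolates_def
  proof (intro conjI ballI)
    show "f i \<in> Fc" unfolding f_def by (rule class_invariant[rule_format, OF f0i Rorth[OF that]])
  next
    fix t assume "t \<in> agent_triplets m xc gc fv P Fb i"
    then obtain k where k: "k < m" and t: "t = (P (i, xc k), P (i, gc k), Fb i (fv k))"
      unfolding agent_triplets_def by blast
    have kk: "xc k < p" "gc k < p" using idx k by auto
    have "(P (0, xc k), P (0, gc k), Fb 0 (fv k)) \<in> agent_triplets m xc gc fv P Fb 0"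
      unfolding agent_triplets_def using k by blast
    then have v0: "f0 (P (0, xc k)) = Fb 0 (fv k)"
      and d0: "(f0 has_derivative (\<lambda>h. inner (P (0, gc k)) h)) (at (P (0, xc k)))"
      using f0t by auto
    have val: "f i (P (i, xc k)) = Fb i (fv k)"
      using fP[OF that kk(1)] v0 symF[OF that] by simp
    have L: "((\<lambda>x. transpose (R i) *v x) has_derivative (\<lambda>x. transpose (R i) *v x)) (at (P (i, xc k)))"
      by (rule bounded_linear_imp_has_derivative) (rule matrix_vector_mul_bounded_linear)
    have Lx: "transpose (R i) *v P (i, xc k) = P (0, xc k)"
      using RP[OF that kk(1), symmetric] RtR[OF that] by simp
    have "((\<lambda>x. f0 (transpose (R i) *v x)) has_derivative (\<lambda>h. inner (P (0, gc k)) (transpose (R i) *v h))) (at (P (i, xc k)))"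
      using has_derivative_compose[OF L] d0 Lx by fastforce
    moreover have "(\<lambda>h. inner (P (0, gc k)) (transpose (R i) *v h)) = (\<lambda>h. inner (P (i, gc k)) h)"
    proof
      fix h
      have "inner (P (0, gc k)) (transpose (R i) *v h) = inner (P (0, gc k) v* transpose (R i)) h"
        by (rule dot_lmul_matrix[symmetric])
      also have "\<dots> = inner (P (i, gc k)) h" using RP[OF that kk(2)] by (simp add: vector_transpose_matrix)
      finally show "inner (P (0, gc k)) (transpose (R i) *v h) = inner (P (i, gc k)) h" .
    qed
    ultimately have der: "(f i has_derivative (\<lambda>h. inner (P (i, gc k)) h)) (at (P (i, xc k)))"
      unfolding f_def by simp
    show "case t of (x, g, v) \<Rightarrow> f i x = v \<and> (f i has_derivative (\<lambda>h. inner g h)) (at x)"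
      using t val der by simp
  qed
  show ?thesis
  proof (intro exI conjI allI impI)
    show "pep_optimal n p q cs cF cG Fb Gb" by (rule optb)
    show "is_gram n p Gb P" by (rule gram)
  next
    fix i assume "i < n" then show "interpolates Fc (f i) (agent_triplets m xc gc fv P Fb i)" by (rule interp_i)
  next
    fix i assume "i < n" then show "orthogonal_matrix (R i)" by (rule Rorth)
  next
    fix i k assume "i < n" "k < m" then show "P (i, xc k) = R i *v P (0, xc k)" using RP idx by simp
  next
    fix i j k assume "i < n" "j < n" "k < m"
    then show "f i (P (i, xc k)) = f j (P (j, xc k))" using fP idx by simp
  next
    fix i x assume "i < n"
    show "f i x = f 0 (transpose (R i) *v x)" unfolding f0eq unfolding f_def ..
  qed
qed

end
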